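(* Let $k\ge0$ be an integer and let $G$ be a threshold graph such that $\mathrm{seq}(G)$ contains at least $k$ ones. Then a vertex $v\in V(G)$ lies in the $k$-core of $G$ if and only if $\deg_G(v)\ge k$.
   Context: A threshold graph on $n\ge1$ vertices is built from a base vertex $v_0$ by successively adding $v_1,\dots,v_{n-1}$, each either isolated (adjacent to no earlier vertex) or dominating (adjacent to all earlier vertices); its creation sequence $\mathrm{seq}(G)=s_1\cdots s_{n-1}$ has $s_i=1$ if $v_i$ is dominating and $s_i=0$ otherwise. The $k$-core of a graph is its maximum induced subgraph in which every vertex has degree at least $k$ (obtained by iteratively deleting vertices of degree less than $k$); it may be empty. *)

theory Defs
  imports Main
begin

text \<open>A simple graph is given by a vertex set V and a symmetric irreflexive
adjacency relation E.\<close>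

definition degree_in :: "'a set \<Rightarrow> ('a \<Rightarrow> 'a \<Rightarrow> bool) \<Rightarrow> 'a \<Rightarrow> nat" where
  "degree_in V E v = card {u \<in> V. E v u}"

text \<open>The k-core: the maximum vertex subset S of V whose induced subgraph has
minimum degree at least k (the union of all such sets, which is itself such a
set; possibly empty).\<close>

definition k_core :: "nat \<Rightarrow> 'a set \<Rightarrow> ('a \<Rightarrow> 'a \<Rightarrow> bool) \<Rightarrow> 'a set" where
  "k_core k V E = \<Union> {S. S \<subseteq> V \<and> (\<forall>v\<in>S. degree_in S E v \<ge> k)}"

text \<open>Threshold graph with creation sequence s = s_1 ... s_(n-1) (True = 1 =
dominating). Vertices v_0, ..., v_(n-1) are 0, ..., n-1 with n = length s + 1;
for i < j, v_i and v_j are adjacent iff v_j is dominating, i.e. s_j = 1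
(list index j - 1).\<close>

definition tg_vertices :: "bool list \<Rightarrow> nat set" where
  "tg_vertices s = {0..<Suc (length s)}"

definition tg_adj :: "bool list \<Rightarrow> nat \<Rightarrow> nat \<Rightarrow> bool" where
  "tg_adj s i j = (i \<noteq> j \<and> s ! (max i j - 1))"

end

theory Submission
  imports Defs
begin

lemma count_filter: "count_list xs x = length (filter (\<lambda>y. y = x) xs)"
  by (induction xs) auto

lemma in_core:
  assumes "S \<subseteq> V" "finite S" "u \<in> S"
    and "\<And>w. w \<in> S \<Longrightarrow> \<exists>A. A \<subseteq> {y \<in> S. E w y} \<and> card A \<ge> k"
  shows "u \<in> k_core k V E"
proof -
  have "\<forall>w\<in>S. degree_in S E w \<ge> k"
  proof
    fix w assume "w \<in> S"
    then obtain A where A: "A \<subseteq> {y \<in> S. E w y}" "card A \<ge> k" using assms(4) by blast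
    have "card A \<le> card {y \<in> S. E w y}" using A(1) assms(2) by (intro card_mono) auto
    thus "degree_in S E w \<ge> k" using A(2) unfolding degree_in_def by simp
  qed
  thus ?thesis using assms unfolding k_core_def by blast
qed

theorem mainTheorem14:
  fixes k :: nat and s :: "bool list" and v :: nat
  assumes "count_list s True \<ge> k"
    and "v \<in> tg_vertices s"
  shows "v \<in> k_core k (tg_vertices s) (tg_adj s) \<longleftrightarrow>
         degree_in (tg_vertices s) (tg_adj s) v \<ge> k"
proof
  assume "v \<in> k_core k (tg_vertices s) (tg_adj s)"
  then obtain S where S: "S \<subseteq> tg_vertices s" "v \<in> S" "\<forall>v\<in>S. degree_in S (tg_adj s) v \<ge> k"
    unfolding k_core_def by blast
  have "card {u \<in> S. tg_adj s v u} \<le> card {u \<in> tg_vertices s. tg_adj s v u}"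
    using S(1) by (intro card_mono) (auto simp: tg_vertices_def)
  thus "degree_in (tg_vertices s) (tg_adj s) v \<ge> k" using S unfolding degree_in_def by force
next
  assume dv: "degree_in (tg_vertices s) (tg_adj s) v \<ge> k"
  define n where "n = length s"
  define V where "V = tg_vertices s"
  have V: "V = {0..<Suc n}" unfolding V_def n_def tg_vertices_def by simp
  define D where "D = {j. 1 \<le> j \<and> j \<le> n \<and> s!(j-1)}"
  have "D = Suc ` {i. i < n \<and> s!i}"
  proof (rule set_eqI)
    fix j show "j \<in> D \<longleftrightarrow> j \<in> Suc ` {i. i < n \<and> s!i}"
      unfolding D_def by (cases j) auto
  qed
  hence cD: "card D = count_list s True"
    by (simp add: card_image count_filter length_filter_conv_card n_def)
  have adj: "\<And>a b. tg_adj s a b \<longleftrightarrow> a \<noteq> b \<and> s!(max a b - 1)" by (simp add: tg_adj_def)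
  have vV: "v \<le> n" using assms(2) V V_def by auto
  show "v \<in> k_core k (tg_vertices s) (tg_adj s)"
  proof (cases "v = 0 \<or> v \<in> D")
    case True
    define S where "S = insert 0 D"
    have SV: "S \<subseteq> V" unfolding S_def D_def V by auto
    have fS: "finite S" using SV V finite_subset by blast
    have "0 \<notin> D" unfolding D_def by simp
    hence cS: "card S = Suc (card D)" unfolding S_def using fS S_def by simp
    show ?thesis unfolding V_def[symmetric]
    proof (rule in_core[OF SV fS])
      show "v \<in> S" using True S_def by auto
    next
      fix w assume w: "w \<in> S"
      have "S - {w} \<subseteq> {y \<in> S. tg_adj s w y}"
      proof
        fix y assume y: "y \<in> S - {w}"
        hence "max w y \<in> D" using w unfolding S_def by (auto simp: max_def)
        hence "s!(max w y - 1)" unfolding D_def by simp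
        thus "y \<in> {y \<in> S. tg_adj s w y}" using y unfolding adj by auto
      qed
      moreover have "card (S - {w}) \<ge> k" using w fS cS cD assms(1) by simp
      ultimately show "\<exists>A. A \<subseteq> {y \<in> S. tg_adj s w y} \<and> card A \<ge> k" by blast
    qed
  next
    case False
    define D' where "D' = {d \<in> D. d > v}"
    have nb: "{u \<in> V. tg_adj s v u} = D'"
    proof -
      have nv: "\<not> s!(v-1)" using False vV unfolding D_def by auto
      show ?thesis unfolding D'_def D_def V adj using nv
        by (auto simp: max_def split: if_splits)
    qed
    have cD': "card D' \<ge> k" using dv nb unfolding degree_in_def V_def by simp
    define S where "S = {0..v} \<union> D'"
    have SV: "S \<subseteq> V" unfolding S_def D'_def D_def V using vV by auto
    have fS: "finite S" using SV V finite_subset by blast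
    show ?thesis unfolding V_def[symmetric]
    proof (rule in_core[OF SV fS])
      show "v \<in> S" using S_def by auto
    next
      fix w assume w: "w \<in> S"
      show "\<exists>A. A \<subseteq> {y \<in> S. tg_adj s w y} \<and> card A \<ge> k"
      proof (cases "w \<le> v")
        case True
        have "D' \<subseteq> {y \<in> S. tg_adj s w y}"
          using True unfolding S_def D'_def D_def adj by (auto simp: max_def)
        thus ?thesis using cD' by blast
      next
        case False
        hence wv: "v < w" by simp
        hence wD: "w \<in> D'" using w S_def by auto
        have "insert v (D' - {w}) \<subseteq> {y \<in> S. tg_adj s w y}"
        proof
          fix y assume y: "y \<in> insert v (D' - {w})"
          have "y \<in> S" using y S_def by auto
          moreover have "y \<noteq> w" using y False by auto
          moreover have "s!(max w y - 1)"
          proof (cases "y \<le> w")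
            case True thus ?thesis using wD unfolding D'_def D_def by (auto simp: max_def)
          next
            case False thus ?thesis using y wv unfolding D'_def D_def by (auto simp: max_def)
          qed
          ultimately show "y \<in> {y \<in> S. tg_adj s w y}" unfolding adj by auto
        qed
        moreover have "card (insert v (D' - {w})) = card D'"
        proof -
          have fD': "finite D'" using SV fS S_def finite_subset by blast
          have "v \<notin> D'" unfolding D'_def by simp
          hence "card (insert v (D' - {w})) = Suc (card (D' - {w}))" using fD' by simp
          also have "\<dots> = card D'" using wD fD'
            by (metis card_Suc_Diff1)
          finally show ?thesis .
        qed
        ultimately show ?thesis using cD' by (metis)
      qed
    qed
  qed
qed

end
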